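(* Let $\lambda_0>\lambda_1$ be countable nonzero additively indecomposable ordinals. Then $\lambda_0\le_{sH}\lambda_0+\lambda_1$ and $\lambda_1\le_{sH}\lambda_0+\lambda_1$.
   Context: Ordinals are identified with linear orders $(\eta,<)$; $\lambda_0+\lambda_1$ denotes ordinal addition. A copy of a countable structure is an isomorphic structure with domain $\omega$. Hyper-Medvedev reducibility: for countable structures, $\mathcal{A}\le_{sH}\mathcal{B}$ means there is a single (pair of) index(es) for a $\Delta^1_1$ definition relative to an oracle such that for every copy $B$ of $\mathcal{B}$, the set defined by this $\Delta^1_1(B)$ definition is (the atomic diagram of) a copy of $\mathcal{A}$; i.e. a copy of $\mathcal{A}$ is uniformly $\Delta^1_1$-definable in every copy of $\mathcal{B}$. An ordinal $\lambda>0$ is additively indecomposable if $\beta+\gamma<\lambda$ whenever $\beta,\gamma<\lambda$. *)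

theory Defs
  imports Main "HOL-Library.Nat_Bijection"
begin

datatype tm = V nat | Zero | Sc tm | Plus tm tm | Times tm tm

datatype fm =
    Eq tm tm | Less tm tm
  | Mem tm nat          \<comment> \<open>t belongs to set variable k (de Bruijn)\<close>
  | Orc tm
  | Neg fm | Conj fm fm | Disj fm fm
  | ExN fm | AllN fm
  | ExS fm | AllS fm

definition scons :: "'a \<Rightarrow> (nat \<Rightarrow> 'a) \<Rightarrow> nat \<Rightarrow> 'a" where
  "scons x e = (\<lambda>i. case i of 0 \<Rightarrow> x | Suc k \<Rightarrow> e k)"

fun evl :: "(nat \<Rightarrow> nat) \<Rightarrow> tm \<Rightarrow> nat" where
  "evl e (V i) = e i"
| "evl e Zero = 0"
| "evl e (Sc t) = Suc (evl e t)"
| "evl e (Plus s t) = evl e s + evl e t"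
| "evl e (Times s t) = evl e s * evl e t"

fun sat :: "nat set \<Rightarrow> (nat \<Rightarrow> nat) \<Rightarrow> (nat \<Rightarrow> nat set) \<Rightarrow> fm \<Rightarrow> bool" where
  "sat B e E (Eq s t) = (evl e s = evl e t)"
| "sat B e E (Less s t) = (evl e s < evl e t)"
| "sat B e E (Mem t k) = (evl e t \<in> E k)"
| "sat B e E (Orc t) = (evl e t \<in> B)"
| "sat B e E (Neg p) = (\<not> sat B e E p)"
| "sat B e E (Conj p q) = (sat B e E p \<and> sat B e E q)"
| "sat B e E (Disj p q) = (sat B e E p \<or> sat B e E q)"
| "sat B e E (ExN p) = (\<exists>m. sat B (scons m e) E p)"
| "sat B e E (AllN p) = (\<forall>m. sat B (scons m e) E p)"
| "sat B e E (ExS p) = (\<exists>X. sat B e (scons X E) p)"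
| "sat B e E (AllS p) = (\<forall>X. sat B e (scons X E) p)"

fun arith :: "fm \<Rightarrow> bool" where
  "arith (Neg p) = arith p"
| "arith (Conj p q) = (arith p \<and> arith q)"
| "arith (Disj p q) = (arith p \<and> arith q)"
| "arith (ExN p) = arith p"
| "arith (AllN p) = arith p"
| "arith (ExS p) = False"
| "arith (AllS p) = False"
| "arith _ = True"

definition sigma11 :: "fm \<Rightarrow> bool" where
  "sigma11 p \<longleftrightarrow> (\<exists>q. p = ExS q \<and> arith q)"

definition pi11 :: "fm \<Rightarrow> bool" where
  "pi11 p \<longleftrightarrow> (\<exists>q. p = AllS q \<and> arith q)"

definition dset :: "nat set \<Rightarrow> fm \<Rightarrow> nat set" where
  "dset B p = {n. sat B (scons n (\<lambda>_. 0)) (\<lambda>_. {}) p}"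

text \<open>A linear order is given by its reflexive order relation (as Well_order in Main).\<close>

definition iso_rel :: "('a \<times> 'a) set \<Rightarrow> ('b \<times> 'b) set \<Rightarrow> bool" where
  "iso_rel S r \<longleftrightarrow> (\<exists>f. bij_betw f (Field S) (Field r) \<and>
     (\<forall>i\<in>Field S. \<forall>j\<in>Field S. (i, j) \<in> S \<longleftrightarrow> (f i, f j) \<in> r))"

definition copy_of :: "(nat \<times> nat) set \<Rightarrow> ('a \<times> 'a) set \<Rightarrow> bool" where
  "copy_of S r \<longleftrightarrow> (Field S = UNIV \<or> (\<exists>n. Field S = {..<n})) \<and> iso_rel S r"

definition diag :: "(nat \<times> nat) set \<Rightarrow> nat set" where
  "diag S = prod_encode ` S"

definition sH_le :: "('a \<times> 'a) set \<Rightarrow> ('b \<times> 'b) set \<Rightarrow> bool" where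
  "sH_le A B \<longleftrightarrow> (\<exists>p q. sigma11 p \<and> pi11 q \<and>
     (\<forall>S. copy_of S B \<longrightarrow>
        dset (diag S) p = dset (diag S) q \<and>
        copy_of (prod_decode ` dset (diag S) p) A))"

definition osum :: "('a \<times> 'a) set \<Rightarrow> ('b \<times> 'b) set \<Rightarrow> (('a + 'b) \<times> ('a + 'b)) set" where
  "osum r s = {(Inl a, Inl b) | a b. (a, b) \<in> r} \<union> {(Inr a, Inr b) | a b. (a, b) \<in> s}
     \<union> {(Inl a, Inr b) | a b. a \<in> Field r \<and> b \<in> Field s}"

text \<open>Countable ordinals are represented by well-orders on (subsets of) nat.\<close>
definition add_indecomp :: "(nat \<times> nat) set \<Rightarrow> bool" where
  "add_indecomp l \<longleftrightarrow> Well_order l \<and> l \<noteq> {} \<and>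
     (\<forall>b g :: (nat \<times> nat) set. Well_order b \<longrightarrow> Well_order g \<longrightarrow>
        (b, l) \<in> ordLess \<longrightarrow> (g, l) \<in> ordLess \<longrightarrow> (osum b g :: ((nat + nat) \<times> (nat + nat)) set, l) \<in> ordLess)"

end

theory Submission
  imports Defs "HOL-Library.Infinite_Set"
begin
unbundle cardinal_syntax


lemma scons_0[simp]: "scons x e 0 = x" and scons_Suc[simp]: "scons x e (Suc k) = e k"
  and scons_num[simp]: "scons x e (numeral n) = e (pred_numeral n)"
  by (simp_all add: scons_def numeral_eq_Suc)

definition cd :: "nat \<Rightarrow> nat \<Rightarrow> nat" where
  "cd u v = (u+v)*(u+v+1) + 2*u"

lemma cd_pe: "cd u v = 2 * prod_encode (u,v)"
proof -
  have "even ((u+v) * Suc (u+v))" by simp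
  then have "2 * ((u+v) * Suc (u+v) div 2) = (u+v) * Suc (u+v)" by simp
  then show ?thesis by (simp add: cd_def prod_encode_def triangle_def algebra_simps)
qed

lemma cd_inj[simp]: "cd u v = cd u' v' \<longleftrightarrow> u = u' \<and> v = v'"
  by (simp add: cd_pe prod_encode_eq)

definition CT :: "tm \<Rightarrow> tm \<Rightarrow> tm" where
  "CT s t = Plus (Times (Plus s t) (Sc (Plus s t))) (Plus s s)"

lemma evl_CT[simp]: "evl e (CT s t) = cd (evl e s) (evl e t)"
  by (simp add: CT_def cd_def)

fun lft :: "tm \<Rightarrow> tm" where
  "lft (V i) = V (Suc i)"
| "lft Zero = Zero"
| "lft (Sc t) = Sc (lft t)"
| "lft (Plus s t) = Plus (lft s) (lft t)"
| "lft (Times s t) = Times (lft s) (lft t)"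

lemma evl_lft[simp]: "evl (scons m e) (lft t) = evl e t"
  by (induction t) auto

fun numT :: "nat \<Rightarrow> tm" where
  "numT 0 = Zero" | "numT (Suc k) = Sc (numT k)"

lemma evl_numT[simp]: "evl e (numT k) = k"
  by (induction k) auto

definition SR :: "nat set \<Rightarrow> (nat \<times> nat) set" where
  "SR D = {(a,b). prod_encode (a,b) \<in> D}"

lemma SR_diag[simp]: "SR (diag S) = S"
  by (auto simp: SR_def diag_def inj_on_def prod_encode_eq inj_image_mem_iff[OF inj_prod_encode])

definition inS :: "tm \<Rightarrow> tm \<Rightarrow> fm" where
  "inS s t = ExN (Conj (Eq (Plus (V 0) (V 0)) (CT (lft s) (lft t))) (Orc (V 0)))"

lemma sat_inS[simp]: "sat D e E (inS s t) \<longleftrightarrow> (evl e s, evl e t) \<in> SR D"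
proof -
  have "\<And>m k::nat. m + m = 2 * k \<longleftrightarrow> m = k" by auto
  then show ?thesis by (auto simp: inS_def SR_def cd_pe)
qed

lemma arith_inS[simp]: "arith (inS s t)" by (simp add: inS_def)

definition ltS :: "tm \<Rightarrow> tm \<Rightarrow> fm" where
  "ltS s t = Conj (inS s t) (Neg (Eq s t))"

lemma sat_ltS[simp]: "sat D e E (ltS s t) \<longleftrightarrow> (evl e s, evl e t) \<in> SR D \<and> evl e s \<noteq> evl e t"
  by (simp add: ltS_def)

lemma arith_ltS[simp]: "arith (ltS s t)" by (simp add: ltS_def)

definition Imp :: "fm \<Rightarrow> fm \<Rightarrow> fm" where "Imp p q = Disj (Neg p) q"

lemma sat_Imp[simp]: "sat D e E (Imp p q) \<longleftrightarrow> (sat D e E p \<longrightarrow> sat D e E q)"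
  by (simp add: Imp_def)
lemma arith_Imp[simp]: "arith (Imp p q) \<longleftrightarrow> arith p \<and> arith q" by (simp add: Imp_def)

definition slc :: "nat set \<Rightarrow> nat \<Rightarrow> nat set" where
  "slc X k = {m. cd k m \<in> X}"

definition gr :: "nat set \<Rightarrow> (nat \<times> nat) set" where
  "gr Y = {(u,v). cd u v \<in> Y}"

lemma slc_surj: "\<exists>X. slc X = F"
  by (rule exI[of _ "{cd k m |k m. m \<in> F k}"]) (auto simp: slc_def fun_eq_iff)

lemma gr_surj: "\<exists>Y. gr Y = G"
  by (rule exI[of _ "{cd u v |u v. (u,v) \<in> G}"]) (auto simp: gr_def)

text \<open>Bits: component 0; witnesses: component 1 (sliced by element); enumeration graph: component 2.\<close>

definition bitF :: "tm \<Rightarrow> fm" where "bitF t = Mem (CT (numT 0) t) 0"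
definition gmF :: "tm \<Rightarrow> tm \<Rightarrow> tm \<Rightarrow> fm" where
  "gmF x u v = Mem (CT (numT 1) (CT x (CT u v))) 0"
definition geF :: "tm \<Rightarrow> tm \<Rightarrow> fm" where
  "geF i b = Mem (CT (numT 2) (CT i b)) 0"

abbreviation WW :: "nat set \<Rightarrow> nat \<Rightarrow> (nat \<times> nat) set" where
  "WW X c \<equiv> gr (slc (slc X 1) c)"

lemma sat_bitF[simp]: "sat D e E (bitF t) \<longleftrightarrow> evl e t \<in> slc (E 0) 0"
  by (simp add: bitF_def slc_def)
lemma sat_gmF[simp]: "sat D e E (gmF x u v) \<longleftrightarrow> (evl e u, evl e v) \<in> WW (E 0) (evl e x)"
  by (simp add: gmF_def slc_def gr_def)
lemma sat_geF[simp]: "sat D e E (geF i b) \<longleftrightarrow> (evl e i, evl e b) \<in> gr (slc (E 0) 2)"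
  by (simp add: geF_def slc_def gr_def)
lemma arith_atoms[simp]: "arith (bitF t)" "arith (gmF x u v)" "arith (geF i b)"
  by (simp_all add: bitF_def gmF_def geF_def)

definition SIR :: "(nat \<times> nat) set \<Rightarrow> (nat \<times> nat) set \<Rightarrow> nat set \<Rightarrow> nat set \<Rightarrow> bool" where
  "SIR S G Dm Cd \<longleftrightarrow> (\<forall>u\<in>Dm. \<exists>v. (u,v) \<in> G \<and> v \<in> Cd) \<and>
     (\<forall>u v u' v'. (u,v) \<in> G \<longrightarrow> (u',v') \<in> G \<longrightarrow> u \<in> Dm \<longrightarrow> u' \<in> Dm \<longrightarrow> (u,u') \<in> S \<longrightarrow> u \<noteq> u'
        \<longrightarrow> (v,v') \<in> S \<and> v \<noteq> v')"

definition Tset :: "(nat \<times> nat) set \<Rightarrow> nat \<Rightarrow> nat set" where "Tset S x = {u. (x,u) \<in> S}"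
definition Iset :: "(nat \<times> nat) set \<Rightarrow> nat \<Rightarrow> nat set" where "Iset S x = {u. (u,x) \<in> S \<and> u \<noteq> x}"

abbreviation "l2 t \<equiv> lft (lft t)"
abbreviation "l4 t \<equiv> lft (lft (lft (lft t)))"

definition sir :: "(tm \<Rightarrow> tm \<Rightarrow> fm) \<Rightarrow> (tm \<Rightarrow> tm \<Rightarrow> fm) \<Rightarrow> tm \<Rightarrow> fm" where
  "sir dm cm x = Conj
    (AllN (Imp (dm (lft x) (V 0)) (ExN (Conj (gmF (l2 x) (V 1) (V 0)) (cm (l2 x) (V 0))))))
    (AllN (AllN (AllN (AllN (Imp (Conj (gmF (l4 x) (V 3) (V 2)) (Conj (gmF (l4 x) (V 1) (V 0))
       (Conj (dm (l4 x) (V 3)) (Conj (dm (l4 x) (V 1)) (ltS (V 3) (V 1)))))) (ltS (V 2) (V 0)))))))"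

definition TF :: "tm \<Rightarrow> tm \<Rightarrow> fm" where "TF x u = inS x u"
definition IF :: "tm \<Rightarrow> tm \<Rightarrow> fm" where "IF x u = ltS u x"

lemma sat_TF[simp]: "sat D e E (TF x u) \<longleftrightarrow> evl e u \<in> Tset (SR D) (evl e x)"
  by (simp add: TF_def Tset_def)
lemma sat_IF[simp]: "sat D e E (IF x u) \<longleftrightarrow> evl e u \<in> Iset (SR D) (evl e x)"
  by (simp add: IF_def Iset_def)
lemma arith_TI[simp]: "arith (TF x u)" "arith (IF x u)" by (simp_all add: TF_def IF_def)

lemma sat_sir:
  assumes dm: "\<And>e s t. sat D e E (dm s t) \<longleftrightarrow> evl e t \<in> Pd (evl e s)"
  and cm: "\<And>e s t. sat D e E (cm s t) \<longleftrightarrow> evl e t \<in> Pc (evl e s)"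
  shows "sat D e E (sir dm cm x) \<longleftrightarrow> SIR (SR D) (WW (E 0) (evl e x)) (Pd (evl e x)) (Pc (evl e x))"
  by (simp add: sir_def dm cm SIR_def) blast

lemma arith_sir[simp]: "(\<And>s t. arith (dm s t)) \<Longrightarrow> (\<And>s t. arith (cm s t)) \<Longrightarrow> arith (sir dm cm x)"
  by (simp add: sir_def)

abbreviation "pA x \<equiv> sir IF TF x"
abbreviation "pB x \<equiv> sir TF IF x"

lemma sat_pA[simp]: "sat D e E (pA x) \<longleftrightarrow> SIR (SR D) (WW (E 0) (evl e x)) (Iset (SR D) (evl e x)) (Tset (SR D) (evl e x))"
  by (rule sat_sir) simp_all
lemma sat_pB[simp]: "sat D e E (pB x) \<longleftrightarrow> SIR (SR D) (WW (E 0) (evl e x)) (Tset (SR D) (evl e x)) (Iset (SR D) (evl e x))"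
  by (rule sat_sir) simp_all

definition VB :: fm where
  "VB = AllN (Imp (inS (V 0) (V 0)) (Disj (Conj (bitF (V 0)) (pA (V 0))) (Conj (Neg (bitF (V 0))) (pB (V 0)))))"

definition VBs :: "(nat \<times> nat) set \<Rightarrow> nat set \<Rightarrow> bool" where
  "VBs S X \<longleftrightarrow> (\<forall>c. (c,c) \<in> S \<longrightarrow>
     (c \<in> slc X 0 \<and> SIR S (WW X c) (Iset S c) (Tset S c)) \<or>
     (c \<notin> slc X 0 \<and> SIR S (WW X c) (Tset S c) (Iset S c)))"

lemma sat_VB[simp]: "sat D e E VB \<longleftrightarrow> VBs (SR D) (E 0)"
  by (simp add: VB_def VBs_def)

lemma arith_VB[simp]: "arith VB" by (simp add: VB_def)

definition VE :: fm where
  "VE = Conj (AllN (ExN (geF (V 1) (V 0))))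
       (Conj (AllN (AllN (Imp (geF (V 1) (V 0)) (Conj (inS (V 0) (V 0)) (Neg (bitF (V 0)))))))
       (Conj (AllN (AllN (AllN (Imp (Conj (geF (V 2) (V 1)) (geF (V 2) (V 0))) (Eq (V 1) (V 0))))))
       (Conj (AllN (AllN (AllN (AllN (Imp (Conj (geF (V 3) (V 1)) (Conj (geF (V 2) (V 0)) (Less (V 3) (V 2)))) (Less (V 1) (V 0)))))))
       (AllN (Imp (Conj (inS (V 0) (V 0)) (Neg (bitF (V 0)))) (ExN (geF (V 0) (V 1))))))))"

definition VEs :: "(nat \<times> nat) set \<Rightarrow> nat set \<Rightarrow> bool" where
  "VEs S X \<longleftrightarrow> (let G = gr (slc X 2) in
     (\<forall>i. \<exists>b. (i,b) \<in> G) \<and> (\<forall>i b. (i,b) \<in> G \<longrightarrow> (b,b) \<in> S \<and> b \<notin> slc X 0) \<and>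
     (\<forall>i b b'. (i,b) \<in> G \<longrightarrow> (i,b') \<in> G \<longrightarrow> b = b') \<and>
     (\<forall>i i' b b'. (i,b) \<in> G \<longrightarrow> (i',b') \<in> G \<longrightarrow> i < i' \<longrightarrow> b < b') \<and>
     (\<forall>c. (c,c) \<in> S \<longrightarrow> c \<notin> slc X 0 \<longrightarrow> (\<exists>i. (i,c) \<in> G)))"

lemma sat_VE[simp]: "sat D e E VE \<longleftrightarrow> VEs (SR D) (E 0)"
  by (simp add: VE_def VEs_def Let_def) blast

lemma arith_VE[simp]: "arith VE" by (simp add: VE_def)



lemma WO_refl: "Well_order r \<Longrightarrow> a \<in> Field r \<Longrightarrow> (a,a) \<in> r"
  by (simp add: well_order_on_def linear_order_on_def partial_order_on_def preorder_on_def refl_on_def)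
lemma WO_trans: assumes "Well_order r" "(a,b) \<in> r" "(b,c) \<in> r" shows "(a,c) \<in> r"
proof -
  have "trans r" using assms by (simp add: well_order_on_def linear_order_on_def partial_order_on_def preorder_on_def)
  then show ?thesis using assms(2,3) by (rule transD)
qed
lemma WO_antisym: assumes "Well_order r" "(a,b) \<in> r" "(b,a) \<in> r" shows "a = b"
proof -
  have "antisym r" using assms by (simp add: well_order_on_def linear_order_on_def partial_order_on_def)
  then show ?thesis using assms(2,3) by (rule antisymD)
qed
lemma WO_total: assumes "Well_order r" "a \<in> Field r" "b \<in> Field r" shows "(a,b) \<in> r \<or> (b,a) \<in> r"
proof (cases "a = b")
  case True then show ?thesis using WO_refl[OF assms(1,2)] by simp
next
  case False
  have "total_on (Field r) r" using assms(1) by (simp add: well_order_on_def linear_order_on_def)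
  then show ?thesis using False assms(2,3) unfolding total_on_def by simp
qed
lemma WO_wf: "Well_order r \<Longrightarrow> wf (r - Id)"
  by (simp add: well_order_on_def)

definition SI :: "('a \<times> 'a) set \<Rightarrow> ('b \<times> 'b) set \<Rightarrow> ('a \<Rightarrow> 'b) \<Rightarrow> bool" where
  "SI r r' f \<longleftrightarrow> (\<forall>a\<in>Field r. f a \<in> Field r') \<and>
    (\<forall>a\<in>Field r. \<forall>b\<in>Field r. (a,b) \<in> r \<longrightarrow> a \<noteq> b \<longrightarrow> (f a, f b) \<in> r' \<and> f a \<noteq> f b)"

lemma SI_D1: "SI r r' f \<Longrightarrow> a \<in> Field r \<Longrightarrow> f a \<in> Field r'"
  unfolding SI_def by blast
lemma SI_D2: "SI r r' f \<Longrightarrow> a \<in> Field r \<Longrightarrow> b \<in> Field r \<Longrightarrow> (a,b) \<in> r \<Longrightarrow> a \<noteq> b \<Longrightarrow> (f a, f b) \<in> r' \<and> f a \<noteq> f b"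
  unfolding SI_def by blast

lemma SI_self:
  assumes W: "Well_order r" and f: "SI r r f" and a: "a \<in> Field r"
  shows "(a, f a) \<in> r"
proof -
  have "x \<in> Field r \<longrightarrow> (x, f x) \<in> r" for x
  proof (induction x rule: wf_induct_rule[OF WO_wf[OF W]])
    case (1 m)
    show ?case
    proof
      assume mF: "m \<in> Field r"
      show "(m, f m) \<in> r"
      proof (rule ccontr)
        assume nm: "(m, f m) \<notin> r"
        have fm: "f m \<in> Field r" using SI_D1[OF f mF] .
        have ne: "m \<noteq> f m" using nm WO_refl[OF W mF] by auto
        have fmm: "(f m, m) \<in> r" using WO_total[OF W mF fm] nm by auto
        have ff: "(f (f m), f m) \<in> r" "f (f m) \<noteq> f m" using SI_D2[OF f fm mF fmm] ne by auto
        have "(f m, m) \<in> r - Id" using fmm ne by auto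
        then have "(f m, f (f m)) \<in> r" using 1 fm by blast
        then have "f m = f (f m)" using WO_antisym[OF W _ ff(1)] by simp
        then show False using ff(2) by simp
      qed
    qed
  qed
  then show ?thesis using a by simp
qed

lemma SI_I:
  assumes "\<And>a. a \<in> Field r \<Longrightarrow> f a \<in> Field r'"
  and "\<And>a b. a \<in> Field r \<Longrightarrow> b \<in> Field r \<Longrightarrow> (a,b) \<in> r \<Longrightarrow> a \<noteq> b \<Longrightarrow> (f a, f b) \<in> r' \<and> f a \<noteq> f b"
  shows "SI r r' f"
  unfolding SI_def using assms by simp

lemma SI_comp: assumes f: "SI r r' f" and g: "SI r' r'' g" shows "SI r r'' (g \<circ> f)"
proof (rule SI_I)
  fix a assume "a \<in> Field r" then show "(g \<circ> f) a \<in> Field r''"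
    using SI_D1[OF g SI_D1[OF f]] by simp
next
  fix a b assume a: "a \<in> Field r" and b: "b \<in> Field r" and ab: "(a,b) \<in> r" "a \<noteq> b"
  have "(f a, f b) \<in> r' \<and> f a \<noteq> f b" using SI_D2[OF f a b ab] .
  then show "((g \<circ> f) a, (g \<circ> f) b) \<in> r'' \<and> (g \<circ> f) a \<noteq> (g \<circ> f) b"
    using SI_D2[OF g SI_D1[OF f a] SI_D1[OF f b]] by simp
qed

lemma Field_Restr_sub: "Field (Restr r X) \<subseteq> Field r"
  unfolding Field_def by blast

lemma SI_Restr: assumes f: "SI r r' f" shows "SI (Restr r X) r' f"
proof (rule SI_I)
  fix a assume "a \<in> Field (Restr r X)"
  then have "a \<in> Field r" using Field_Restr_sub[of r X] by (rule subsetD[rotated])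
  then show "f a \<in> Field r'" by (rule SI_D1[OF f])
next
  fix a b assume a: "a \<in> Field (Restr r X)" and b: "b \<in> Field (Restr r X)"
    and ab: "(a,b) \<in> Restr r X" "a \<noteq> b"
  have "a \<in> Field r" "b \<in> Field r" using a b Field_Restr_sub[of r X] by (auto dest: subsetD)
  then show "(f a, f b) \<in> r' \<and> f a \<noteq> f b"
    using SI_D2[OF f] ab by simp
qed

lemma SI_sub: assumes "r \<subseteq> r'" shows "SI r r' id"
proof (rule SI_I)
  fix a assume "a \<in> Field r" then show "id a \<in> Field r'"
    using assms unfolding Field_def by auto
next
  fix a b assume "(a,b) \<in> r" "a \<noteq> b" then show "(id a, id b) \<in> r' \<and> id a \<noteq> id b"
    using assms by auto
qed

lemma SI_ordLeq:
  assumes W: "Well_order r" and W': "Well_order r'" and f: "SI r r' f"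
  shows "r <=o r'"
proof -
  have "\<not> r' <o r"
  proof
    assume "r' <o r"
    then obtain a where a: "a \<in> Field r" and iso: "r' =o Restr r (underS r a)"
      using ordLess_iff_ordIso_Restr[OF W W'] by blast
    then obtain h where h: "iso r' (Restr r (underS r a)) h" unfolding ordIso_def by blast
    then have hb: "bij_betw h (Field r') (Field (Restr r (underS r a)))"
      and hp: "\<And>x y. x \<in> Field r' \<Longrightarrow> y \<in> Field r' \<Longrightarrow> (x,y) \<in> r' \<longleftrightarrow> (h x, h y) \<in> Restr r (underS r a)"
      unfolding iso_iff2 by blast+
    have hSI: "SI r' (Restr r (underS r a)) h"
    proof (rule SI_I)
      fix x assume "x \<in> Field r'" then show "h x \<in> Field (Restr r (underS r a))"
        using hb by (rule bij_betw_apply[rotated])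
    next
      fix x y assume x: "x \<in> Field r'" and y: "y \<in> Field r'" and xy: "(x,y) \<in> r'" "x \<noteq> y"
      have "h x \<noteq> h y" using hb x y xy(2) unfolding bij_betw_def inj_on_def by blast
      then show "(h x, h y) \<in> Restr r (underS r a) \<and> h x \<noteq> h y" using hp[OF x y] xy(1) by simp
    qed
    have "SI (Restr r (underS r a)) r id" by (rule SI_sub) auto
    then have "SI r' r (id \<circ> h)" using hSI SI_comp by blast
    then have g: "SI r r (h \<circ> f)" using SI_comp[OF f] by (simp add: comp_def)
    have 1: "(a, h (f a)) \<in> r" using SI_self[OF W g a] by simp
    have "h (f a) \<in> Field (Restr r (underS r a))"
      using hb SI_D1[OF f a] by (rule bij_betw_apply)
    then have "h (f a) \<in> underS r a" unfolding Field_def by auto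
    then have 2: "(h (f a), a) \<in> r" "h (f a) \<noteq> a" by (auto simp: underS_def)
    show False using WO_antisym[OF W 1 2(1)] 2(2) by simp
  qed
  then show ?thesis using ordLess_or_ordLeq[OF W' W] by blast
qed

lemma ordLeq_SI:
  assumes "r <=o r'" shows "\<exists>f. SI r r' f"
proof -
  from assms obtain f where W: "Well_order r" "Well_order r'" and e: "embed r r' f"
    unfolding ordLeq_def by blast
  have c: "compat r r' f" using e by (rule embed_compat)
  have i: "inj_on f (Field r)" using embed_inj_on W e by blast
  have fl: "f ` Field r \<subseteq> Field r'" using e by (rule embed_Field)
  have "SI r r' f"
  proof (rule SI_I)
    fix x assume "x \<in> Field r" then show "f x \<in> Field r'" using fl by blast
  next
    fix x y assume "x \<in> Field r" "y \<in> Field r" "(x,y) \<in> r" "x \<noteq> y"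
    then show "(f x, f y) \<in> r' \<and> f x \<noteq> f y" using c i unfolding compat_def inj_on_def by blast
  qed
  then show ?thesis by blast
qed


lemma osum_simps[simp]:
  "(Inl a, Inl b) \<in> osum r s \<longleftrightarrow> (a,b) \<in> r"
  "(Inr c, Inr d) \<in> osum r s \<longleftrightarrow> (c,d) \<in> s"
  "(Inl a, Inr d) \<in> osum r s \<longleftrightarrow> a \<in> Field r \<and> d \<in> Field s"
  "(Inr c, Inl b) \<notin> osum r s"
  unfolding osum_def by auto

lemma Field_osum: "Field (osum r s) = Inl ` Field r \<union> Inr ` Field s"
proof (rule set_eqI)
  fix x show "x \<in> Field (osum r s) \<longleftrightarrow> x \<in> Inl ` Field r \<union> Inr ` Field s"
  proof (cases x)
    case (Inl a)
    have "Inl a \<in> Field (osum r s) \<longleftrightarrow> a \<in> Field r"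
    proof
      assume "Inl a \<in> Field (osum r s)"
      then obtain y where "(Inl a, y) \<in> osum r s \<or> (y, Inl a) \<in> osum r s" unfolding Field_def by blast
      then show "a \<in> Field r" by (cases y) (auto intro: FieldI1 FieldI2)
    next
      assume "a \<in> Field r"
      then obtain b where "(a,b) \<in> r \<or> (b,a) \<in> r" unfolding Field_def by blast
      then show "Inl a \<in> Field (osum r s)" by (metis FieldI1 FieldI2 osum_simps(1))
    qed
    then show ?thesis using Inl by auto
  next
    case (Inr a)
    have "Inr a \<in> Field (osum r s) \<longleftrightarrow> a \<in> Field s"
    proof
      assume "Inr a \<in> Field (osum r s)"
      then obtain y where "(Inr a, y) \<in> osum r s \<or> (y, Inr a) \<in> osum r s" unfolding Field_def by blast
      then show "a \<in> Field s" by (cases y) (auto intro: FieldI1 FieldI2)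
    next
      assume "a \<in> Field s"
      then obtain b where "(a,b) \<in> s \<or> (b,a) \<in> s" unfolding Field_def by blast
      then show "Inr a \<in> Field (osum r s)" by (metis FieldI1 FieldI2 osum_simps(2))
    qed
    then show ?thesis using Inr by auto
  qed
qed

lemma Well_order_osum:
  assumes r: "Well_order r" and s: "Well_order s"
  shows "Well_order (osum r s)"
proof -
  let ?o = "osum r s"
  have refl: "refl_on (Field ?o) ?o"
  proof (rule refl_onI)
    fix x assume "x \<in> Field ?o"
    then show "(x,x) \<in> ?o" unfolding Field_osum using WO_refl[OF r] WO_refl[OF s]
      by auto
  qed
  have trans: "trans ?o"
  proof (rule transI)
    fix x y z assume xy: "(x,y) \<in> ?o" and yz: "(y,z) \<in> ?o"
    show "(x,z) \<in> ?o"
    proof (cases x; cases y; cases z)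
      fix a b c assume "x = Inl a" "y = Inl b" "z = Inl c"
      then show ?thesis using xy yz WO_trans[OF r] by simp
    next
      fix a b c assume "x = Inl a" "y = Inl b" "z = Inr c"
      then show ?thesis using xy yz by (simp add: FieldI1)
    next
      fix a b c assume "x = Inl a" "y = Inr b" "z = Inr c"
      then show ?thesis using xy yz by (simp add: FieldI2)
    next
      fix a b c assume "x = Inr a" "y = Inr b" "z = Inr c"
      then show ?thesis using xy yz WO_trans[OF s] by simp
    qed (use xy yz in simp_all)
  qed
  have anti: "antisym ?o"
  proof (rule antisymI)
    fix x y assume xy: "(x,y) \<in> ?o" and yx: "(y,x) \<in> ?o"
    show "x = y"
    proof (cases x; cases y)
      fix a b assume "x = Inl a" "y = Inl b" then show ?thesis using xy yx WO_antisym[OF r] by simp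
    next
      fix a b assume "x = Inr a" "y = Inr b" then show ?thesis using xy yx WO_antisym[OF s] by simp
    qed (use xy yx in simp_all)
  qed
  have tot: "total_on (Field ?o) ?o"
  proof (rule total_onI)
    fix x y assume x: "x \<in> Field ?o" and y: "y \<in> Field ?o" and "x \<noteq> y"
    show "(x,y) \<in> ?o \<or> (y,x) \<in> ?o"
    proof (cases x; cases y)
      fix a b assume "x = Inl a" "y = Inl b" then show ?thesis using x y WO_total[OF r] unfolding Field_osum by auto
    next
      fix a b assume "x = Inr a" "y = Inr b" then show ?thesis using x y WO_total[OF s] unfolding Field_osum by auto
    next
      fix a b assume "x = Inl a" "y = Inr b" then show ?thesis using x y unfolding Field_osum by auto
    next
      fix a b assume "x = Inr a" "y = Inl b" then show ?thesis using x y unfolding Field_osum by auto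
    qed
  qed
  let ?L = "map_prod Inl Inl ` (r - Id) :: (('a+'b) \<times> ('a+'b)) set"
  let ?R = "map_prod Inr Inr ` (s - Id) :: (('a+'b) \<times> ('a+'b)) set"
  let ?C = "{(Inl a, Inr b) | a b. a \<in> Field r \<and> b \<in> Field s} :: (('a+'b) \<times> ('a+'b)) set"
  have wL: "wf ?L" by (rule wf_map_prod_image[OF WO_wf[OF r]]) (simp add: inj_on_def)
  have wR: "wf ?R" by (rule wf_map_prod_image[OF WO_wf[OF s]]) (simp add: inj_on_def)
  have wC: "wf ?C"
  proof (rule wfI_min)
    fix x :: "'a+'b" and Q assume "x \<in> Q"
    show "\<exists>z\<in>Q. \<forall>y. (y, z) \<in> ?C \<longrightarrow> y \<notin> Q"
    proof (cases "\<exists>a. Inl a \<in> Q")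
      case True then obtain a where "Inl a \<in> Q" by blast
      then show ?thesis by (intro bexI[of _ "Inl a"]) auto
    next
      case False then show ?thesis using \<open>x \<in> Q\<close> by (intro bexI[of _ x]) auto
    qed
  qed
  have w1: "wf (?C \<union> ?R)" by (rule wf_Un[OF wC wR]) auto
  have w2: "wf (?L \<union> (?C \<union> ?R))" by (rule wf_Un[OF wL w1]) auto
  have "?o - Id \<subseteq> ?L \<union> (?C \<union> ?R)"
  proof
    fix p assume p: "p \<in> ?o - Id"
    obtain x y where pxy: "p = (x,y)" by (cases p)
    show "p \<in> ?L \<union> (?C \<union> ?R)"
    proof (cases x; cases y)
      fix a b assume "x = Inl a" "y = Inl b"
      then have "(a,b) \<in> r - Id" "p = map_prod Inl Inl (a,b)" using p pxy by auto
      then show ?thesis by blast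
    next
      fix a b assume "x = Inr a" "y = Inr b"
      then have "(a,b) \<in> s - Id" "p = map_prod Inr Inr (a,b)" using p pxy by auto
      then show ?thesis by blast
    next
      fix a b assume "x = Inl a" "y = Inr b" then show ?thesis using p pxy by auto
    next
      fix a b assume "x = Inr a" "y = Inl b" then show ?thesis using p pxy by auto
    qed
  qed
  then have "wf (?o - Id)" using w2 wf_subset by blast
  moreover have "?o \<subseteq> Field ?o \<times> Field ?o" by (auto intro: FieldI1 FieldI2)
  ultimately show ?thesis using refl trans anti tot
    by (simp add: well_order_on_def linear_order_on_def partial_order_on_def preorder_on_def)
qed



lemma Restr_Restr: "Restr (Restr r X) Y = Restr r (X \<inter> Y)" by blast

locale split =
  fixes S :: "(nat \<times> nat) set" and A B :: "nat set"
  assumes WA: "Well_order (Restr S A)" and WB: "Well_order (Restr S B)"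
  and AB: "A \<inter> B = {}" and FS: "Field S = A \<union> B"
  and rfl: "\<And>x. x \<in> Field S \<Longrightarrow> (x,x) \<in> S"
  and crossAB: "\<And>a b. a \<in> A \<Longrightarrow> b \<in> B \<Longrightarrow> (a,b) \<in> S"
  and crossBA: "\<And>a b. a \<in> A \<Longrightarrow> b \<in> B \<Longrightarrow> (b,a) \<notin> S"
  and less: "Restr S B <o Restr S A"
  and indec: "add_indecomp (Restr S A)"
begin

lemma FR: assumes "X \<subseteq> Field S" shows "Field (Restr S X) = X"
proof
  show "Field (Restr S X) \<subseteq> X" unfolding Field_def by auto
next
  show "X \<subseteq> Field (Restr S X)"
  proof
    fix x assume x: "x \<in> X"
    then have "(x,x) \<in> Restr S X" using rfl assms by auto
    then show "x \<in> Field (Restr S X)" by (rule FieldI1)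
  qed
qed

lemma FA: "Field (Restr S A) = A" using FR FS by auto
lemma FB: "Field (Restr S B) = B" using FR FS by auto

lemma WAsub: "X \<subseteq> A \<Longrightarrow> Well_order (Restr S X)"
  using Well_order_Restr[OF WA, of X] by (simp add: Restr_Restr Int_absorb1)
lemma WBsub: "X \<subseteq> B \<Longrightarrow> Well_order (Restr S X)"
  using Well_order_Restr[OF WB, of X] by (simp add: Restr_Restr Int_absorb1)

abbreviation "T x \<equiv> Tset S x"
abbreviation "I x \<equiv> Iset S x"

lemma T_sub: "T x \<subseteq> Field S" unfolding Tset_def by (auto intro: FieldI2)
lemma I_sub: "I x \<subseteq> Field S" unfolding Iset_def by (auto intro: FieldI1)

lemma SIR_SI:
  assumes "Dm \<subseteq> Field S" "Cd \<subseteq> Field S"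
  shows "(\<exists>G. SIR S G Dm Cd) \<longleftrightarrow> (\<exists>f. SI (Restr S Dm) (Restr S Cd) f)"
proof
  assume "\<exists>G. SIR S G Dm Cd"
  then obtain G where G: "SIR S G Dm Cd" by blast
  define f where "f u = (SOME v. (u,v) \<in> G \<and> v \<in> Cd)" for u
  have fG: "(u, f u) \<in> G \<and> f u \<in> Cd" if "u \<in> Dm" for u
    unfolding f_def using G that unfolding SIR_def by (metis (mono_tags, lifting) someI_ex)
  have "SI (Restr S Dm) (Restr S Cd) f"
  proof (rule SI_I)
    fix a assume "a \<in> Field (Restr S Dm)"
    then have "a \<in> Dm" using FR[OF assms(1)] by simp
    then show "f a \<in> Field (Restr S Cd)" using fG FR[OF assms(2)] by simp
  next
    fix a b assume a: "a \<in> Field (Restr S Dm)" and b: "b \<in> Field (Restr S Dm)"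
      and ab: "(a,b) \<in> Restr S Dm" "a \<noteq> b"
    have aD: "a \<in> Dm" and bD: "b \<in> Dm" using a b FR[OF assms(1)] by auto
    have "(f a, f b) \<in> S \<and> f a \<noteq> f b"
      using G fG[OF aD] fG[OF bD] aD bD ab unfolding SIR_def by blast
    then show "(f a, f b) \<in> Restr S Cd \<and> f a \<noteq> f b" using fG[OF aD] fG[OF bD] by auto
  qed
  then show "\<exists>f. SI (Restr S Dm) (Restr S Cd) f" by blast
next
  assume "\<exists>f. SI (Restr S Dm) (Restr S Cd) f"
  then obtain f where f: "SI (Restr S Dm) (Restr S Cd) f" by blast
  let ?G = "{(u, f u) | u. u \<in> Dm}"
  have "SIR S ?G Dm Cd"
    unfolding SIR_def
  proof (intro conjI allI impI ballI)
    fix u assume u: "u \<in> Dm"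
    have "f u \<in> Field (Restr S Cd)" using SI_D1[OF f] u FR[OF assms(1)] by simp
    then have "f u \<in> Cd" using FR[OF assms(2)] by simp
    then show "\<exists>v. (u, v) \<in> ?G \<and> v \<in> Cd" using u by blast
  next
    fix u v u' v' assume "(u,v) \<in> ?G" "(u',v') \<in> ?G" and u: "u \<in> Dm" and u': "u' \<in> Dm"
      and uu: "(u,u') \<in> S" "u \<noteq> u'"
    then have v: "v = f u" "v' = f u'" by auto
    have "(f u, f u') \<in> Restr S Cd \<and> f u \<noteq> f u'"
      using SI_D2[OF f] u u' uu FR[OF assms(1)] by simp
    then show "(v, v') \<in> S" "v \<noteq> v'" using v by auto
  qed
  then show "\<exists>G. SIR S G Dm Cd" by blast
qed

lemma IA: assumes "x \<in> A" shows "I x \<subseteq> A"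
proof
  fix v assume "v \<in> I x"
  then have v: "(v,x) \<in> S" "v \<noteq> x" unfolding Iset_def by auto
  then have "v \<in> Field S" by (auto intro: FieldI1)
  then show "v \<in> A" using FS crossBA[OF assms] v by blast
qed

lemma TB: assumes "x \<in> B" shows "T x \<subseteq> B"
proof
  fix v assume "v \<in> T x"
  then have v: "(x,v) \<in> S" unfolding Tset_def by auto
  then have "v \<in> Field S" by (auto intro: FieldI2)
  then show "v \<in> B" using FS crossBA[OF _ assms] v by blast
qed

lemma AI: assumes "x \<in> B" shows "A \<subseteq> I x"
proof
  fix a assume "a \<in> A" then show "a \<in> I x"
    using crossAB[OF _ assms] AB assms unfolding Iset_def by auto
qed

lemma underS_A: assumes "x \<in> A" shows "underS (Restr S A) x = I x"
  using IA[OF assms] assms unfolding underS_def Iset_def by auto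

lemma indecD: "b <o Restr S A \<Longrightarrow> g <o Restr S A \<Longrightarrow> (osum b g :: ((nat+nat) \<times> (nat+nat)) set) <o Restr S A"
  using indec unfolding add_indecomp_def by (auto simp: ordLess_def)

lemma IsubLess: assumes "x \<in> A" shows "Restr S (I x) <o Restr S A"
proof -
  have "Field (Restr S A) \<noteq> {}" using FA assms by auto
  from underS_Restr_ordLess[OF WA this, of x]
  show ?thesis using underS_A[OF assms] IA[OF assms] by (simp add: Restr_Restr Int_absorb1)
qed

lemma Cl: assumes x: "x \<in> A" shows "Restr S (I x) <o Restr S (T x \<inter> A)"
proof (rule ccontr)
  let ?U = "I x" and ?V = "T x \<inter> A"
  have WU: "Well_order (Restr S ?U)" using WAsub IA[OF x] by blast
  have WV: "Well_order (Restr S ?V)" using WAsub by blast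
  assume "\<not> Restr S ?U <o Restr S ?V"
  then have "Restr S ?V <=o Restr S ?U" using ordLess_or_ordLeq[OF WU WV] by blast
  then have V: "Restr S ?V <o Restr S A" using IsubLess[OF x] ordLeq_ordLess_trans by blast
  have O: "osum (Restr S ?U) (Restr S ?V) <o Restr S A" by (rule indecD[OF IsubLess[OF x] V])
  have FU: "Field (Restr S ?U) = ?U" using FR I_sub by blast
  have FV: "Field (Restr S ?V) = ?V" using FR FS by auto
  define \<phi> where "\<phi> y = (if y \<in> ?U then Inl y else Inr y)" for y :: nat
  have inV: "y \<in> ?V" if "y \<in> A" "y \<notin> ?U" for y
  proof -
    have "(x,y) \<in> S"
    proof (cases "y = x")
      case True then show ?thesis using rfl FS x by auto
    next
      case False
      then have "(y,x) \<notin> S" using that(2) unfolding Iset_def by auto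
      moreover have "(x,y) \<in> Restr S A \<or> (y,x) \<in> Restr S A" using WO_total[OF WA] FA x that(1) by auto
      ultimately show ?thesis by auto
    qed
    then show ?thesis using that unfolding Tset_def by auto
  qed
  have "SI (Restr S A) (osum (Restr S ?U) (Restr S ?V)) \<phi>"
  proof (rule SI_I)
    fix a assume "a \<in> Field (Restr S A)"
    then have a: "a \<in> A" using FA by simp
    show "\<phi> a \<in> Field (osum (Restr S ?U) (Restr S ?V))"
      unfolding Field_osum FU FV \<phi>_def using inV[OF a] by auto
  next
    fix a b assume a: "a \<in> Field (Restr S A)" and b: "b \<in> Field (Restr S A)"
      and ab: "(a,b) \<in> Restr S A" "a \<noteq> b"
    have aA: "a \<in> A" and bA: "b \<in> A" using a b FA by auto
    show "(\<phi> a, \<phi> b) \<in> osum (Restr S ?U) (Restr S ?V) \<and> \<phi> a \<noteq> \<phi> b"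
    proof (cases "a \<in> ?U"; cases "b \<in> ?U")
      assume "a \<in> ?U" "b \<in> ?U" then show ?thesis using ab unfolding \<phi>_def by auto
    next
      assume "a \<in> ?U" "b \<notin> ?U" then show ?thesis using inV[OF bA] FU FV unfolding \<phi>_def by auto
    next
      assume au: "a \<notin> ?U" and bu: "b \<in> ?U"
      have "(x,a) \<in> S" using inV[OF aA au] unfolding Tset_def by auto
      moreover have "(b,x) \<in> S" "b \<noteq> x" using bu unfolding Iset_def by auto
      moreover have "(x,a) \<in> Restr S A" "(b,x) \<in> Restr S A" using calculation aA bA x by auto
      then have "(x,b) \<in> Restr S A" using WO_trans[OF WA] ab(1) by blast
      ultimately have "x = b" using WO_antisym[OF WA, of x b] by auto
      then show ?thesis using \<open>b \<noteq> x\<close> by simp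
    next
      assume "a \<notin> ?U" "b \<notin> ?U" then show ?thesis using ab inV[OF aA] inV[OF bA] unfolding \<phi>_def by auto
    qed
  qed
  then have "Restr S A <=o osum (Restr S ?U) (Restr S ?V)"
    using SI_ordLeq[OF WA Well_order_osum[OF WU WV]] by blast
  then have "osum (Restr S ?U) (Restr S ?V) <o osum (Restr S ?U) (Restr S ?V)"
    using O ordLess_ordLeq_trans by blast
  then show False using ordLess_irreflexive by blast
qed

lemma MA1: assumes x: "x \<in> A" shows "\<exists>f. SI (Restr S (I x)) (Restr S (T x)) f"
proof -
  obtain f where f: "SI (Restr S (I x)) (Restr S (T x \<inter> A)) f"
    using ordLeq_SI[OF ordLess_imp_ordLeq[OF Cl[OF x]]] by blast
  have "SI (Restr S (T x \<inter> A)) (Restr S (T x)) id" by (rule SI_sub) auto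
  then show ?thesis using SI_comp[OF f] by blast
qed

lemma MA2: assumes x: "x \<in> A" shows "\<not> (\<exists>f. SI (Restr S (T x)) (Restr S (I x)) f)"
proof
  assume "\<exists>f. SI (Restr S (T x)) (Restr S (I x)) f"
  then obtain f where "SI (Restr S (T x)) (Restr S (I x)) f" by blast
  then have "SI (Restr (Restr S (T x)) A) (Restr S (I x)) f" by (rule SI_Restr)
  then have f: "SI (Restr S (T x \<inter> A)) (Restr S (I x)) f" by (simp add: Restr_Restr)
  have "Restr S (T x \<inter> A) <=o Restr S (I x)"
    by (rule SI_ordLeq[OF WAsub WAsub f]) (use IA[OF x] in auto)
  then show False using Cl[OF x] not_ordLess_ordLeq by blast
qed

lemma MB1: assumes x: "x \<in> B" shows "\<exists>f. SI (Restr S (T x)) (Restr S (I x)) f"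
proof -
  have "SI (Restr S (T x)) (Restr S B) id" by (rule SI_sub) (use TB[OF x] in auto)
  then have "Restr S (T x) <=o Restr S B" using SI_ordLeq[OF WBsub[OF TB[OF x]] WB] by blast
  then have "Restr S (T x) <=o Restr S A" using less ordLeq_ordLess_trans ordLess_imp_ordLeq by blast
  then obtain f where f: "SI (Restr S (T x)) (Restr S A) f" using ordLeq_SI by blast
  have "SI (Restr S A) (Restr S (I x)) id" by (rule SI_sub) (use AI[OF x] in auto)
  then show ?thesis using SI_comp[OF f] by blast
qed

lemma MB2: assumes x: "x \<in> B" shows "\<not> (\<exists>f. SI (Restr S (I x)) (Restr S (T x)) f)"
proof
  assume "\<exists>f. SI (Restr S (I x)) (Restr S (T x)) f"
  then obtain f where "SI (Restr S (I x)) (Restr S (T x)) f" by blast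
  then have "SI (Restr (Restr S (I x)) A) (Restr S (T x)) f" by (rule SI_Restr)
  then have f: "SI (Restr S A) (Restr S (T x)) f" using AI[OF x] by (simp add: Restr_Restr Int_absorb1)
  have "SI (Restr S (T x)) (Restr S B) id" by (rule SI_sub) (use TB[OF x] in auto)
  then have "Restr S (T x) <=o Restr S B" using SI_ordLeq[OF WBsub[OF TB[OF x]] WB] by blast
  moreover have "Restr S A <=o Restr S (T x)" using SI_ordLeq[OF WA WBsub[OF TB[OF x]] f] .
  ultimately have "Restr S A <o Restr S A" using less ordLeq_transitive ordLeq_ordLess_trans by blast
  then show False using ordLess_irreflexive by blast
qed

lemma charA: "c \<in> Field S \<Longrightarrow> (\<exists>G. SIR S G (I c) (T c)) \<longleftrightarrow> c \<in> A"
  using SIR_SI[OF I_sub T_sub] MA1 MB2 FS by blast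
lemma charB: "c \<in> Field S \<Longrightarrow> (\<exists>G. SIR S G (T c) (I c)) \<longleftrightarrow> c \<in> B"
  using SIR_SI[OF T_sub I_sub] MB1 MA2 FS by blast

end


lemma iso_rel_ordIso: assumes "r =o s" shows "iso_rel r s"
proof -
  from assms obtain f where "iso r s f" unfolding ordIso_def by blast
  then show ?thesis unfolding iso_rel_def iso_iff2 by blast
qed

lemma iso_rel_trans: assumes "iso_rel r s" "iso_rel s t" shows "iso_rel r t"
proof -
  obtain f where f: "bij_betw f (Field r) (Field s)"
    and fp: "\<forall>i\<in>Field r. \<forall>j\<in>Field r. (i, j) \<in> r \<longleftrightarrow> (f i, f j) \<in> s"
    using assms(1) unfolding iso_rel_def by blast
  obtain g where g: "bij_betw g (Field s) (Field t)"
    and gp: "\<forall>i\<in>Field s. \<forall>j\<in>Field s. (i, j) \<in> s \<longleftrightarrow> (g i, g j) \<in> t"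
    using assms(2) unfolding iso_rel_def by blast
  have "bij_betw (g \<circ> f) (Field r) (Field t)" using bij_betw_trans[OF f g] .
  moreover have "\<forall>i\<in>Field r. \<forall>j\<in>Field r. (i, j) \<in> r \<longleftrightarrow> ((g \<circ> f) i, (g \<circ> f) j) \<in> t"
  proof (intro ballI)
    fix i j assume i: "i \<in> Field r" and j: "j \<in> Field r"
    have "f i \<in> Field s" "f j \<in> Field s" using f i j by (auto dest: bij_betw_apply)
    then show "(i, j) \<in> r \<longleftrightarrow> ((g \<circ> f) i, (g \<circ> f) j) \<in> t" using fp i j gp by simp
  qed
  ultimately show ?thesis unfolding iso_rel_def by blast
qed

definition R0s :: "(nat \<times> nat) set \<Rightarrow> nat set \<Rightarrow> (nat \<times> nat) set" where
  "R0s S X = {(x,y). (x,x) \<in> S \<and> (y,y) \<in> S \<and> ((x \<notin> slc X 0 \<and> y \<in> slc X 0) \<or>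
     ((x,y) \<in> S \<and> ((x \<in> slc X 0 \<and> y \<in> slc X 0) \<or> (x \<notin> slc X 0 \<and> y \<notin> slc X 0))))}"

definition R1s :: "(nat \<times> nat) set \<Rightarrow> nat set \<Rightarrow> (nat \<times> nat) set" where
  "R1s S X = {(i,j). \<exists>b b'. (i,b) \<in> gr (slc X 2) \<and> (j,b') \<in> gr (slc X 2) \<and> (b,b') \<in> S}"

lemma strict_mono_range_unique:
  fixes f g :: "nat \<Rightarrow> nat"
  assumes f: "strict_mono f" and g: "strict_mono g" and r: "range f = range g"
  shows "f = g"
proof -
  have "f n = g n" for n
  proof (induction n rule: less_induct)
    case (less n)
    show ?case
    proof (rule ccontr)
      assume ne: "f n \<noteq> g n"
      show False
      proof (cases "f n < g n")
        case True
        have "f n \<in> range g" using r by auto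
        then obtain m where m: "f n = g m" by auto
        then have "m < n" using True g by (metis strict_mono_less)
        then have "f m = g m" using less by simp
        then have "f m = f n" using m by simp
        then show False using f \<open>m < n\<close> by (metis strict_mono_less less_irrefl)
      next
        case False
        then have lt: "g n < f n" using ne by simp
        have "g n \<in> range f" using r by auto
        then obtain m where m: "g n = f m" by auto
        then have "m < n" using lt f by (metis strict_mono_less)
        then have "f m = g m" using less by simp
        then have "g m = g n" using m by simp
        then show False using g \<open>m < n\<close> by (metis strict_mono_less less_irrefl)
      qed
    qed
  qed
  then show ?thesis by blast
qed

context split
begin

lemma VBs_bits: assumes "VBs S X" "c \<in> Field S" shows "c \<in> slc X 0 \<longleftrightarrow> c \<in> A"
proof -
  have "(c,c) \<in> S" using rfl assms(2) .
  then have "(c \<in> slc X 0 \<and> SIR S (WW X c) (I c) (T c)) \<or> (c \<notin> slc X 0 \<and> SIR S (WW X c) (T c) (I c))"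
    using assms(1) unfolding VBs_def by blast
  then show ?thesis
  proof
    assume h: "c \<in> slc X 0 \<and> SIR S (WW X c) (I c) (T c)"
    then have "c \<in> A" using charA[OF assms(2)] by blast
    then show ?thesis using h by simp
  next
    assume h: "c \<notin> slc X 0 \<and> SIR S (WW X c) (T c) (I c)"
    then have "c \<in> B" using charB[OF assms(2)] by blast
    then show ?thesis using h AB by auto
  qed
qed

lemma VBs_ex: "\<exists>Z. \<forall>X. slc X 0 = A \<longrightarrow> slc X 1 = Z \<longrightarrow> VBs S X"
proof -
  define G where "G c = (SOME G. SIR S G (if c \<in> A then I c else T c) (if c \<in> A then T c else I c))" for c
  have G: "SIR S (G c) (if c \<in> A then I c else T c) (if c \<in> A then T c else I c)" if cF: "c \<in> Field S" for c
  proof (cases "c \<in> A")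
    case True
    then obtain G' where "SIR S G' (I c) (T c)" using charA[OF cF] by blast
    then show ?thesis unfolding G_def using True by simp (rule someI)
  next
    case False
    then have "c \<in> B" using FS cF by auto
    then obtain G' where "SIR S G' (T c) (I c)" using charB[OF cF] by blast
    then show ?thesis unfolding G_def using False by simp (rule someI)
  qed
  define Y where "Y c = (SOME Y. gr Y = G c)" for c
  have Y: "gr (Y c) = G c" for c unfolding Y_def by (rule someI_ex[OF gr_surj])
  obtain Z where Z: "slc Z = Y" using slc_surj by blast
  have "VBs S X" if "slc X 0 = A" "slc X 1 = Z" for X
    unfolding VBs_def
  proof (intro allI impI)
    fix c assume "(c,c) \<in> S"
    then have cF: "c \<in> Field S" by (rule FieldI1)
    have W: "WW X c = G c" using that Z Y by simp
    show "(c \<in> slc X 0 \<and> SIR S (WW X c) (I c) (T c)) \<or> (c \<notin> slc X 0 \<and> SIR S (WW X c) (T c) (I c))"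
      using G[OF cF] W that(1) by (cases "c \<in> A") auto
  qed
  then show ?thesis by blast
qed

definition R0 :: "(nat \<times> nat) set" where
  "R0 = {(x,y). x \<in> Field S \<and> y \<in> Field S \<and> ((x \<in> B \<and> y \<in> A) \<or> ((x,y) \<in> S \<and> (x \<in> A \<longleftrightarrow> y \<in> A)))}"

lemma R0s_eq: assumes "VBs S X" shows "R0s S X = R0"
proof (rule set_eqI)
  fix p :: "nat \<times> nat"
  obtain x y where p: "p = (x,y)" by (cases p)
  show "p \<in> R0s S X \<longleftrightarrow> p \<in> R0"
  proof (cases "x \<in> Field S \<and> y \<in> Field S")
    case True
    then have bx: "x \<in> slc X 0 \<longleftrightarrow> x \<in> A" and bY: "y \<in> slc X 0 \<longleftrightarrow> y \<in> A"
      using VBs_bits[OF assms] by auto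
    have xx: "(x,x) \<in> S" "(y,y) \<in> S" using rfl True by auto
    have xB: "x \<in> B \<longleftrightarrow> x \<notin> A" using True FS AB by auto
    have "p \<in> R0s S X \<longleftrightarrow> ((x \<notin> slc X 0 \<and> y \<in> slc X 0) \<or>
     ((x,y) \<in> S \<and> ((x \<in> slc X 0 \<and> y \<in> slc X 0) \<or> (x \<notin> slc X 0 \<and> y \<notin> slc X 0))))"
      unfolding R0s_def p using xx by simp
    moreover have "p \<in> R0 \<longleftrightarrow> ((x \<in> B \<and> y \<in> A) \<or> ((x,y) \<in> S \<and> (x \<in> A \<longleftrightarrow> y \<in> A)))"
      unfolding R0_def p using True by simp
    ultimately show ?thesis unfolding bx bY xB by blast
  next
    case False
    then have "(x,x) \<notin> S \<or> (y,y) \<notin> S" by (auto intro: FieldI1)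
    then show ?thesis unfolding R0s_def R0_def p using False by auto
  qed
qed

lemma Field_R0: "Field R0 = Field S"
proof
  show "Field R0 \<subseteq> Field S" unfolding R0_def Field_def by auto
next
  show "Field S \<subseteq> Field R0"
  proof
    fix x assume "x \<in> Field S"
    then have "(x,x) \<in> R0" unfolding R0_def using rfl by auto
    then show "x \<in> Field R0" by (rule FieldI1)
  qed
qed

abbreviation "T0 \<equiv> osum (Restr S B) (Restr S A)"

lemma WT0: "Well_order T0" by (rule Well_order_osum[OF WB WA])

lemma T0_le: "T0 <=o Restr S A"
proof -
  have "\<not> Restr S A <o T0"
  proof
    assume "Restr S A <o T0"
    then obtain z where z: "z \<in> Field T0" and iso: "Restr S A =o Restr T0 (underS T0 z)"
      using ordLess_iff_ordIso_Restr[OF WT0 WA] by blast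
    let ?Q = "Restr T0 (underS T0 z)"
    have WQ: "Well_order ?Q" by (rule Well_order_Restr[OF WT0])
    show False
    proof (cases z)
      case (Inl b)
      define \<pi> where "\<pi> v = (case v of Inl u \<Rightarrow> u | Inr u \<Rightarrow> u)" for v :: "nat + nat"
      have un: "\<exists>u. v = Inl u \<and> u \<in> B" if "v \<in> underS T0 z" for v
      proof (cases v)
        case (Inl u) then show ?thesis using that Field_osum[of "Restr S B" "Restr S A"] FB
          by (auto simp: underS_def dest: FieldI1)
      next
        case (Inr u) then show ?thesis using that \<open>z = Inl b\<close> by (auto simp: underS_def)
      qed
      have "SI ?Q (Restr S B) \<pi>"
      proof (rule SI_I)
        fix v assume "v \<in> Field ?Q"
        then have "v \<in> underS T0 z" unfolding Field_def by auto
        then obtain u where "v = Inl u" "u \<in> B" using un by blast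
        then show "\<pi> v \<in> Field (Restr S B)" using FB unfolding \<pi>_def by auto
      next
        fix v w assume v: "v \<in> Field ?Q" and w: "w \<in> Field ?Q" and vw: "(v,w) \<in> ?Q" "v \<noteq> w"
        have "v \<in> underS T0 z" "w \<in> underS T0 z" using v w unfolding Field_def by auto
        then obtain u u' where "v = Inl u" "w = Inl u'" using un by blast
        then show "(\<pi> v, \<pi> w) \<in> Restr S B \<and> \<pi> v \<noteq> \<pi> w" using vw unfolding \<pi>_def by auto
      qed
      then have "?Q <=o Restr S B" using SI_ordLeq[OF WQ WB] by blast
      then have "Restr S A <o Restr S A"
        using iso less ordIso_ordLeq_trans ordLeq_ordLess_trans by blast
      then show False using ordLess_irreflexive by blast
    next
      case (Inr a)
      have aA: "a \<in> A" using z Inr Field_osum[of "Restr S B" "Restr S A"] FA by auto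
      let ?O = "osum (Restr S B) (Restr S (I a))"
      have WI: "Well_order (Restr S (I a))" using WAsub IA[OF aA] by blast
      have FI: "Field (Restr S (I a)) = I a" using FR I_sub by blast
      have "?Q \<subseteq> ?O"
      proof
        fix p assume p: "p \<in> ?Q"
        obtain v w where pvw: "p = (v,w)" by (cases p)
        have vw: "(v,w) \<in> T0" "v \<in> underS T0 z" "w \<in> underS T0 z" using p pvw by auto
        show "p \<in> ?O"
        proof (cases v; cases w)
          fix u u' assume "v = Inl u" "w = Inl u'" then show ?thesis using vw pvw by simp
        next
          fix u u' assume "v = Inr u" "w = Inr u'"
          then show ?thesis using vw pvw Inr unfolding underS_def Iset_def by auto
        next
          fix u u' assume "v = Inl u" "w = Inr u'"
          then show ?thesis using vw pvw Inr FI unfolding underS_def Iset_def by auto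
        next
          fix u u' assume "v = Inr u" "w = Inl u'" then show ?thesis using vw pvw by simp
        qed
      qed
      then have "SI ?Q ?O id" by (rule SI_sub)
      then have "?Q <=o ?O" using SI_ordLeq[OF WQ Well_order_osum[OF WB WI]] by blast
      moreover have "?O <o Restr S A" by (rule indecD[OF less IsubLess[OF aA]])
      ultimately have "Restr S A <o Restr S A"
        using iso ordIso_ordLeq_trans ordLeq_ordLess_trans by blast
      then show False using ordLess_irreflexive by blast
    qed
  qed
  then show ?thesis using ordLess_or_ordLeq[OF WA WT0] by blast
qed

lemma T0_ge: "Restr S A <=o T0"
proof -
  have "SI (Restr S A) T0 Inr"
  proof (rule SI_I)
    fix a assume "a \<in> Field (Restr S A)" then show "Inr a \<in> Field T0"
      unfolding Field_osum by auto
  next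
    fix a b assume "(a,b) \<in> Restr S A" "a \<noteq> b" then show "(Inr a, Inr b) \<in> T0 \<and> (Inr a :: nat + nat) \<noteq> Inr b"
      by simp
  qed
  then show ?thesis using SI_ordLeq[OF WA WT0] by blast
qed

lemma iso_R0_T0: "iso_rel R0 T0"
proof -
  define \<phi> where "\<phi> x = (if x \<in> B then Inl x else Inr x)" for x :: nat
  have "bij_betw \<phi> (Field R0) (Field T0)"
    unfolding bij_betw_def
  proof
    show "inj_on \<phi> (Field R0)" unfolding inj_on_def \<phi>_def by auto
    show "\<phi> ` Field R0 = Field T0"
    proof
      show "\<phi> ` Field R0 \<subseteq> Field T0"
      proof
        fix v assume "v \<in> \<phi> ` Field R0"
        then obtain x where x: "x \<in> A \<or> x \<in> B" "v = \<phi> x" using Field_R0 FS by auto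
        show "v \<in> Field T0" unfolding Field_osum FA FB using x AB unfolding \<phi>_def by (cases "x \<in> B") auto
      qed
    next
      show "Field T0 \<subseteq> \<phi> ` Field R0"
      proof
        fix v assume v: "v \<in> Field T0"
        show "v \<in> \<phi> ` Field R0"
        proof (cases v)
          case (Inl u) then have "u \<in> B" using v unfolding Field_osum FB by auto
          then have "\<phi> u = v" "u \<in> Field R0" using Inl Field_R0 FS unfolding \<phi>_def by auto
          then show ?thesis by (metis imageI)
        next
          case (Inr u) then have "u \<in> A" using v unfolding Field_osum FA by auto
          then have "\<phi> u = v" "u \<in> Field R0" using Inr Field_R0 FS AB unfolding \<phi>_def by auto
          then show ?thesis by (metis imageI)
        qed
      qed
    qed
  qed
  moreover have "\<forall>i\<in>Field R0. \<forall>j\<in>Field R0. (i, j) \<in> R0 \<longleftrightarrow> (\<phi> i, \<phi> j) \<in> T0"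
  proof (intro ballI)
    fix i j assume "i \<in> Field R0" "j \<in> Field R0"
    then have i: "i \<in> A \<or> i \<in> B" and j: "j \<in> A \<or> j \<in> B" using Field_R0 FS by auto
    have iF: "i \<in> Field S" "j \<in> Field S" using i j FS by auto
    have R: "(i, j) \<in> R0 \<longleftrightarrow> ((i \<in> B \<and> j \<in> A) \<or> ((i,j) \<in> S \<and> (i \<in> A \<longleftrightarrow> j \<in> A)))"
      unfolding R0_def using iF by simp
    show "(i, j) \<in> R0 \<longleftrightarrow> (\<phi> i, \<phi> j) \<in> T0"
    proof (cases "i \<in> B"; cases "j \<in> B")
      assume "i \<in> B" "j \<in> B" then show ?thesis using R AB unfolding \<phi>_def by auto
    next
      assume "i \<in> B" "j \<notin> B" then show ?thesis using R AB j FA FB unfolding \<phi>_def by auto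
    next
      assume "i \<notin> B" "j \<in> B" then show ?thesis using R AB i unfolding \<phi>_def by auto
    next
      assume "i \<notin> B" "j \<notin> B" then show ?thesis using R AB i j unfolding \<phi>_def by auto
    qed
  qed
  ultimately show ?thesis unfolding iso_rel_def by blast
qed

lemma iso_R0: "iso_rel R0 (Restr S A)"
proof -
  have "T0 =o Restr S A" using ordIso_iff_ordLeq T0_le T0_ge by blast
  then show ?thesis using iso_R0_T0 iso_rel_trans iso_rel_ordIso by blast
qed

end


context split
begin

definition R1 :: "(nat \<times> nat) set" where
  "R1 = {(i,j). (enumerate B i, enumerate B j) \<in> S}"

lemma R1s_eq:
  assumes inf: "infinite B" and vb: "VBs S X" and ve: "VEs S X"
  shows "R1s S X = R1"
proof -
  let ?G = "gr (slc X 2)"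
  have E1: "\<forall>i. \<exists>b. (i,b) \<in> ?G" and E2: "\<forall>i b. (i,b) \<in> ?G \<longrightarrow> (b,b) \<in> S \<and> b \<notin> slc X 0"
    and E3: "\<forall>i b b'. (i,b) \<in> ?G \<longrightarrow> (i,b') \<in> ?G \<longrightarrow> b = b'"
    and E4: "\<forall>i i' b b'. (i,b) \<in> ?G \<longrightarrow> (i',b') \<in> ?G \<longrightarrow> i < i' \<longrightarrow> b < b'"
    and E5: "\<forall>c. (c,c) \<in> S \<longrightarrow> c \<notin> slc X 0 \<longrightarrow> (\<exists>i. (i,c) \<in> ?G)"
    using ve unfolding VEs_def Let_def by blast+
  define g where "g i = (SOME b. (i,b) \<in> ?G)" for i
  have gG: "(i, g i) \<in> ?G" for i unfolding g_def using E1 by (metis someI_ex)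
  have gu: "(i,b) \<in> ?G \<longleftrightarrow> b = g i" for i b using gG E3 by blast
  have sm: "strict_mono g" unfolding strict_mono_def using E4 gG by blast
  have rg: "range g = B"
  proof
    show "range g \<subseteq> B"
    proof
      fix b assume "b \<in> range g"
      then obtain i where "b = g i" by auto
      then have "(b,b) \<in> S" "b \<notin> slc X 0" using E2 gG by blast+
      moreover then have "b \<in> Field S" by (auto intro: FieldI1)
      ultimately show "b \<in> B" using VBs_bits[OF vb] FS by blast
    qed
  next
    show "B \<subseteq> range g"
    proof
      fix c assume c: "c \<in> B"
      then have cF: "c \<in> Field S" using FS by auto
      then have "(c,c) \<in> S" using rfl by blast
      moreover have "c \<notin> slc X 0" using VBs_bits[OF vb cF] c AB by auto
      ultimately obtain i where "(i,c) \<in> ?G" using E5 by blast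
      then show "c \<in> range g" using gu by auto
    qed
  qed
  have ge: "g = enumerate B"
    using strict_mono_range_unique[OF sm strict_mono_enumerate[OF inf]] rg range_enumerate[OF inf] by simp
  show ?thesis unfolding R1s_def R1_def using gu ge by auto
qed

lemma VE_ex: assumes inf: "infinite B" shows "\<exists>X. VBs S X \<and> VEs S X"
proof -
  obtain Z where Z: "\<And>X. slc X 0 = A \<Longrightarrow> slc X 1 = Z \<Longrightarrow> VBs S X" using VBs_ex by blast
  obtain Y where Y: "gr Y = {(i, enumerate B i) | i. True}" using gr_surj by blast
  obtain X where X: "slc X = (\<lambda>k. if k = 0 then A else if k = 1 then Z else Y)" using slc_surj by blast
  have vb: "VBs S X" using Z X by simp
  have G: "gr (slc X 2) = {(i, enumerate B i) | i. True}" using X Y by simp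
  have eB: "enumerate B i \<in> B" for i using enumerate_in_set[OF inf] .
  have "VEs S X"
    unfolding VEs_def Let_def G
  proof (intro conjI allI impI)
    fix i show "\<exists>b. (i, b) \<in> {(i, enumerate B i) |i. True}" by blast
  next
    fix i b assume "(i, b) \<in> {(i, enumerate B i) |i. True}"
    then have b: "b = enumerate B i" by auto
    show "(b,b) \<in> S" using b eB rfl FS by auto
    show "b \<notin> slc X 0" using b eB X AB by auto
  next
    fix i b b' assume "(i, b) \<in> {(i, enumerate B i) |i. True}" "(i, b') \<in> {(i, enumerate B i) |i. True}"
    then show "b = b'" by auto
  next
    fix i i' b b' assume "(i, b) \<in> {(i, enumerate B i) |i. True}" "(i', b') \<in> {(i, enumerate B i) |i. True}" "i < i'"
    then show "b < b'" using enumerate_mono[OF _ inf] by auto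
  next
    fix c assume "(c,c) \<in> S" "c \<notin> slc X 0"
    then have "c \<in> B" using X FS by (auto intro: FieldI1)
    then obtain i where "c = enumerate B i" using range_enumerate[OF inf] by auto
    then show "\<exists>i. (i, c) \<in> {(i, enumerate B i) |i. True}" by blast
  qed
  then show ?thesis using vb by blast
qed

lemma Field_R1: assumes inf: "infinite B" shows "Field R1 = UNIV"
proof -
  have "(i,i) \<in> R1" for i unfolding R1_def using enumerate_in_set[OF inf] rfl FS by auto
  then show ?thesis by (auto intro: FieldI1)
qed

lemma iso_R1: assumes inf: "infinite B" shows "iso_rel R1 (Restr S B)"
proof -
  have "bij_betw (enumerate B) (Field R1) (Field (Restr S B))"
    unfolding Field_R1[OF inf] FB by (rule bij_enumerate[OF inf])
  moreover have "\<forall>i\<in>Field R1. \<forall>j\<in>Field R1. (i, j) \<in> R1 \<longleftrightarrow> (enumerate B i, enumerate B j) \<in> Restr S B"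
    unfolding R1_def using enumerate_in_set[OF inf] by auto
  ultimately show ?thesis unfolding iso_rel_def by blast
qed

end


lemma transfer_ordIso:
  assumes W: "Well_order r" and b: "bij_betw g (Field r) (Field w)"
  and p: "\<forall>a\<in>Field r. \<forall>c\<in>Field r. (a,c) \<in> r \<longleftrightarrow> (g a, g c) \<in> w"
  shows "r =o w"
proof -
  have eq: "w = dir_image r g"
  proof
    show "w \<subseteq> dir_image r g"
    proof
      fix q assume q: "q \<in> w"
      obtain u v where uv: "q = (u,v)" by (cases q)
      have "u \<in> Field w" "v \<in> Field w" using q uv by (auto intro: FieldI1 FieldI2)
      then obtain a c where a: "a \<in> Field r" "u = g a" and c: "c \<in> Field r" "v = g c"
        using b unfolding bij_betw_def by blast
      then have "(a,c) \<in> r" using p q uv by auto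
      then show "q \<in> dir_image r g" unfolding dir_image_def using uv a c by blast
    qed
  next
    show "dir_image r g \<subseteq> w"
    proof
      fix q assume "q \<in> dir_image r g"
      then obtain a c where q: "q = (g a, g c)" "(a,c) \<in> r" unfolding dir_image_def by blast
      then have "a \<in> Field r" "c \<in> Field r" by (auto intro: FieldI1 FieldI2)
      then show "q \<in> w" using p q by auto
    qed
  qed
  have "inj_on g (Field r)" using b by (simp add: bij_betw_def)
  then show ?thesis unfolding eq by (rule dir_image_ordIso[OF W])
qed

lemma setup_split:
  assumes c: "copy_of S (osum l0 l1)" and i0: "add_indecomp l0" and i1: "add_indecomp l1"
  and lt: "(l1, l0) \<in> ordLess"
  shows "\<exists>A B. split S A B \<and> Restr S A =o l0 \<and> Restr S B =o l1"
proof -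
  have W0: "Well_order l0" and W1: "Well_order l1" using i0 i1 unfolding add_indecomp_def by auto
  have WO: "Well_order (osum l0 l1)" by (rule Well_order_osum[OF W0 W1])
  obtain f where fb: "bij_betw f (Field S) (Field (osum l0 l1))"
    and fp: "\<forall>i\<in>Field S. \<forall>j\<in>Field S. (i, j) \<in> S \<longleftrightarrow> (f i, f j) \<in> osum l0 l1"
    using c unfolding copy_of_def iso_rel_def by blast
  have fF: "f x \<in> Inl ` Field l0 \<union> Inr ` Field l1" if "x \<in> Field S" for x
    using fb that Field_osum[of l0 l1] by (auto dest: bij_betw_apply)
  define A where "A = {x \<in> Field S. isl (f x)}"
  define B where "B = {x \<in> Field S. \<not> isl (f x)}"
  have fA: "f x = Inl (projl (f x)) \<and> projl (f x) \<in> Field l0" if xA: "x \<in> A" for x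
  proof -
    have x: "x \<in> Field S" "isl (f x)" using xA unfolding A_def by auto
    from fF[OF x(1)] show ?thesis
    proof
      assume "f x \<in> Inl ` Field l0" then obtain a where "f x = Inl a" "a \<in> Field l0" by blast
      then show ?thesis by simp
    next
      assume "f x \<in> Inr ` Field l1" then obtain b where "f x = Inr b" by blast
      then show ?thesis using x(2) by simp
    qed
  qed
  have fB: "f x = Inr (projr (f x)) \<and> projr (f x) \<in> Field l1" if xB: "x \<in> B" for x
  proof -
    have x: "x \<in> Field S" "\<not> isl (f x)" using xB unfolding B_def by auto
    from fF[OF x(1)] show ?thesis
    proof
      assume "f x \<in> Inl ` Field l0" then obtain a where "f x = Inl a" by blast
      then show ?thesis using x(2) by simp
    next
      assume "f x \<in> Inr ` Field l1" then obtain b where "f x = Inr b" "b \<in> Field l1" by blast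
      then show ?thesis by simp
    qed
  qed
  have rfl: "(x,x) \<in> S" if x: "x \<in> Field S" for x
  proof -
    have "f x \<in> Field (osum l0 l1)" using fb x by (rule bij_betw_apply)
    then have "(f x, f x) \<in> osum l0 l1" using WO_refl[OF WO] by blast
    then show ?thesis using fp x by blast
  qed
  have AS: "A \<subseteq> Field S" and BS: "B \<subseteq> Field S" unfolding A_def B_def by auto
  have FS: "Field S = A \<union> B" unfolding A_def B_def by auto
  have AB: "A \<inter> B = {}" unfolding A_def B_def by auto
  have crossAB: "(a,b) \<in> S" if "a \<in> A" "b \<in> B" for a b
  proof -
    have "(f a, f b) \<in> osum l0 l1" using fA[OF that(1)] fB[OF that(2)] by (metis osum_simps(3))
    then show ?thesis using fp that AS BS by blast
  qed
  have crossBA: "(b,a) \<notin> S" if "a \<in> A" "b \<in> B" for a b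
  proof -
    have "(f b, f a) \<notin> osum l0 l1" using fA[OF that(1)] fB[OF that(2)] by (metis osum_simps(4))
    then show ?thesis using fp that AS BS by blast
  qed
  have FRA: "Field (Restr S A) = A"
  proof
    show "Field (Restr S A) \<subseteq> A" unfolding Field_def by auto
    show "A \<subseteq> Field (Restr S A)"
    proof
      fix x assume x: "x \<in> A"
      then have "(x,x) \<in> Restr S A" using rfl AS by auto
      then show "x \<in> Field (Restr S A)" by (rule FieldI1)
    qed
  qed
  have FRB: "Field (Restr S B) = B"
  proof
    show "Field (Restr S B) \<subseteq> B" unfolding Field_def by auto
    show "B \<subseteq> Field (Restr S B)"
    proof
      fix x assume x: "x \<in> B"
      then have "(x,x) \<in> Restr S B" using rfl BS by auto
      then show "x \<in> Field (Restr S B)" by (rule FieldI1)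
    qed
  qed
  have finj: "inj_on f (Field S)" using fb by (simp add: bij_betw_def)
  have isoA: "l0 =o Restr S A"
  proof -
    define g where "g a = inv_into (Field S) f (Inl a)" for a
    have gi: "g a \<in> A \<and> f (g a) = Inl a" if "a \<in> Field l0" for a
    proof -
      have "Inl a \<in> f ` Field S" using fb that Field_osum[of l0 l1] by (auto simp: bij_betw_def)
      then have "g a \<in> Field S" "f (g a) = Inl a" unfolding g_def
        by (auto intro: inv_into_into f_inv_into_f)
      then show ?thesis unfolding A_def by auto
    qed
    have "bij_betw g (Field l0) (Field (Restr S A))"
      unfolding FRA bij_betw_def
    proof
      show "inj_on g (Field l0)" unfolding inj_on_def using gi by (metis sum.inject(1))
      show "g ` Field l0 = A"
      proof
        show "g ` Field l0 \<subseteq> A" using gi by auto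
        show "A \<subseteq> g ` Field l0"
        proof
          fix x assume x: "x \<in> A"
          have "g (projl (f x)) = x" using gi[of "projl (f x)"] fA[OF x] finj x AS
            unfolding inj_on_def by (metis subsetD)
          then show "x \<in> g ` Field l0" using fA[OF x] by (metis imageI)
        qed
      qed
    qed
    moreover have "\<forall>a\<in>Field l0. \<forall>c\<in>Field l0. (a,c) \<in> l0 \<longleftrightarrow> (g a, g c) \<in> Restr S A"
    proof (intro ballI)
      fix a c assume a: "a \<in> Field l0" and c: "c \<in> Field l0"
      have "(g a, g c) \<in> S \<longleftrightarrow> (f (g a), f (g c)) \<in> osum l0 l1" using fp gi[OF a] gi[OF c] AS by blast
      then show "(a,c) \<in> l0 \<longleftrightarrow> (g a, g c) \<in> Restr S A" using gi[OF a] gi[OF c] by simp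
    qed
    ultimately show ?thesis by (rule transfer_ordIso[OF W0])
  qed
  have isoB: "l1 =o Restr S B"
  proof -
    define g where "g a = inv_into (Field S) f (Inr a)" for a
    have gi: "g a \<in> B \<and> f (g a) = Inr a" if "a \<in> Field l1" for a
    proof -
      have "Inr a \<in> f ` Field S" using fb that Field_osum[of l0 l1] by (auto simp: bij_betw_def)
      then have "g a \<in> Field S" "f (g a) = Inr a" unfolding g_def
        by (auto intro: inv_into_into f_inv_into_f)
      then show ?thesis unfolding B_def by auto
    qed
    have "bij_betw g (Field l1) (Field (Restr S B))"
      unfolding FRB bij_betw_def
    proof
      show "inj_on g (Field l1)" unfolding inj_on_def using gi by (metis sum.inject(2))
      show "g ` Field l1 = B"
      proof
        show "g ` Field l1 \<subseteq> B" using gi by auto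
        show "B \<subseteq> g ` Field l1"
        proof
          fix x assume x: "x \<in> B"
          have "g (projr (f x)) = x" using gi[of "projr (f x)"] fB[OF x] finj x BS
            unfolding inj_on_def by (metis subsetD)
          then show "x \<in> g ` Field l1" using fB[OF x] by (metis imageI)
        qed
      qed
    qed
    moreover have "\<forall>a\<in>Field l1. \<forall>c\<in>Field l1. (a,c) \<in> l1 \<longleftrightarrow> (g a, g c) \<in> Restr S B"
    proof (intro ballI)
      fix a c assume a: "a \<in> Field l1" and c: "c \<in> Field l1"
      have "(g a, g c) \<in> S \<longleftrightarrow> (f (g a), f (g c)) \<in> osum l0 l1" using fp gi[OF a] gi[OF c] BS by blast
      then show "(a,c) \<in> l1 \<longleftrightarrow> (g a, g c) \<in> Restr S B" using gi[OF a] gi[OF c] by simp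
    qed
    ultimately show ?thesis by (rule transfer_ordIso[OF W1])
  qed
  have WA: "Well_order (Restr S A)" using isoA unfolding ordIso_def by blast
  have WB: "Well_order (Restr S B)" using isoB unfolding ordIso_def by blast
  have less: "Restr S B <o Restr S A"
    using ordIso_symmetric[OF isoB] lt isoA ordIso_ordLess_trans ordLess_ordIso_trans by blast
  have indec: "add_indecomp (Restr S A)"
    unfolding add_indecomp_def
  proof (intro conjI allI impI)
    show "Well_order (Restr S A)" by (rule WA)
    have "l0 \<noteq> {}" using i0 unfolding add_indecomp_def by blast
    then obtain a b where "(a,b) \<in> l0" by auto
    then have "a \<in> Field l0" by (rule FieldI1)
    then obtain x where "x \<in> A" using isoA FRA unfolding ordIso_def iso_iff2 bij_betw_def by blast
    then have "(x,x) \<in> Restr S A" using rfl AS by auto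
    then show "Restr S A \<noteq> {}" by auto
  next
    fix b g :: "(nat \<times> nat) set"
    assume "Well_order b" "Well_order g" "(b, Restr S A) \<in> ordLess" "(g, Restr S A) \<in> ordLess"
    then have "b <o l0" "g <o l0" using ordIso_symmetric[OF isoA] ordLess_ordIso_trans by blast+
    then have "(osum b g :: ((nat+nat) \<times> (nat+nat)) set) <o l0"
      using i0 \<open>Well_order b\<close> \<open>Well_order g\<close> unfolding add_indecomp_def by blast
    then show "(osum b g :: ((nat+nat) \<times> (nat+nat)) set, Restr S A) \<in> ordLess"
      using isoA ordLess_ordIso_trans by blast
  qed
  have "split S A B"
    by (unfold_locales) (use WA WB AB FS rfl crossAB crossBA less indec in auto)
  then show ?thesis using ordIso_symmetric[OF isoA] ordIso_symmetric[OF isoB] by blast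
qed



definition pairF :: "fm \<Rightarrow> fm" where
  "pairF \<phi> = ExN (ExN (Conj (Eq (Plus (V 2) (V 2)) (CT (V 1) (V 0))) \<phi>))"

lemma arith_pairF[simp]: "arith (pairF \<phi>) \<longleftrightarrow> arith \<phi>" by (simp add: pairF_def)

lemma sat_pairF:
  assumes "\<And>e. sat D e E \<phi> \<longleftrightarrow> (e 1, e 0) \<in> Rel"
  shows "sat D e E (pairF \<phi>) \<longleftrightarrow> e 0 \<in> prod_encode ` Rel"
proof -
  have k: "\<And>m k::nat. m + m = 2 * k \<longleftrightarrow> m = k" by auto
  have "sat D e E (pairF \<phi>) \<longleftrightarrow> (\<exists>x y. e 0 = prod_encode (x,y) \<and> (x,y) \<in> Rel)"
    unfolding pairF_def by (simp add: assms cd_pe k)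
  also have "\<dots> \<longleftrightarrow> e 0 \<in> prod_encode ` Rel" by (auto simp: image_iff)
  finally show ?thesis .
qed

definition Res0 :: "tm \<Rightarrow> tm \<Rightarrow> fm" where
  "Res0 x y = Conj (inS x x) (Conj (inS y y) (Disj (Conj (Neg (bitF x)) (bitF y))
     (Conj (inS x y) (Disj (Conj (bitF x) (bitF y)) (Conj (Neg (bitF x)) (Neg (bitF y)))))))"

definition Res1 :: "tm \<Rightarrow> tm \<Rightarrow> fm" where
  "Res1 i j = ExN (ExN (Conj (geF (l2 i) (V 1)) (Conj (geF (l2 j) (V 0)) (inS (V 1) (V 0)))))"

definition Res2 :: "nat \<Rightarrow> fm" where
  "Res2 n = Conj (Less (V 1) (Sc (V 0))) (Less (V 0) (numT n))"

definition "F0 = pairF (Res0 (V 1) (V 0))"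
definition "F1 = pairF (Res1 (V 1) (V 0))"
definition "F2 n = pairF (Res2 n)"

lemma sat_F0: "sat D e E F0 \<longleftrightarrow> e 0 \<in> prod_encode ` R0s (SR D) (E 0)"
  unfolding F0_def by (rule sat_pairF) (simp add: Res0_def R0s_def)
lemma sat_F1: "sat D e E F1 \<longleftrightarrow> e 0 \<in> prod_encode ` R1s (SR D) (E 0)"
  unfolding F1_def by (rule sat_pairF) (simp add: Res1_def R1s_def)
lemma sat_F2: "sat D e E (F2 n) \<longleftrightarrow> e 0 \<in> prod_encode ` natLeq_on n"
  unfolding F2_def by (rule sat_pairF) (auto simp add: Res2_def)

lemma arith_F[simp]: "arith F0" "arith F1" "arith (F2 n)"
  by (simp_all add: F0_def F1_def F2_def Res0_def Res1_def Res2_def)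

lemma top_lemma:
  assumes "\<exists>X. P X" and "\<And>X. P X \<Longrightarrow> R X = R'"
  shows "{n. \<exists>X. P X \<and> n \<in> R X} = R'" and "{n. \<forall>X. \<not> P X \<or> n \<in> R X} = R'"
  using assms by blast+

definition "p0 = ExS (Conj VB F0)"
definition "q0 = AllS (Disj (Neg VB) F0)"
definition "p1 = ExS (Conj (Conj VB VE) F1)"
definition "q1 = AllS (Disj (Neg (Conj VB VE)) F1)"
definition "p2 n = ExS (F2 n)"
definition "q2 n = AllS (F2 n)"

lemma sig_pi: "sigma11 p0" "pi11 q0" "sigma11 p1" "pi11 q1" "sigma11 (p2 n)" "pi11 (q2 n)"
  unfolding sigma11_def pi11_def p0_def q0_def p1_def q1_def p2_def q2_def by simp_all

lemma dset_p0: "dset D p0 = {n. \<exists>X. VBs (SR D) X \<and> n \<in> prod_encode ` R0s (SR D) X}"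
  unfolding dset_def p0_def by (simp add: sat_F0)
lemma dset_q0: "dset D q0 = {n. \<forall>X. \<not> VBs (SR D) X \<or> n \<in> prod_encode ` R0s (SR D) X}"
  unfolding dset_def q0_def by (simp add: sat_F0)
lemma dset_p1: "dset D p1 = {n. \<exists>X. (VBs (SR D) X \<and> VEs (SR D) X) \<and> n \<in> prod_encode ` R1s (SR D) X}"
  unfolding dset_def p1_def by (simp add: sat_F1)
lemma dset_q1: "dset D q1 = {n. \<forall>X. \<not> (VBs (SR D) X \<and> VEs (SR D) X) \<or> n \<in> prod_encode ` R1s (SR D) X}"
  unfolding dset_def q1_def by (simp add: sat_F1)
lemma dset_p2: "dset D (p2 n) = prod_encode ` natLeq_on n"
  unfolding dset_def p2_def by (simp add: sat_F2)
lemma dset_q2: "dset D (q2 n) = prod_encode ` natLeq_on n"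
  unfolding dset_def q2_def by (simp add: sat_F2)

lemma decode_encode: "prod_decode ` prod_encode ` R = R"
  by (simp add: image_image)



lemma natLeq_iso:
  assumes W: "Well_order l" and fin: "finite (Field l)"
  shows "natLeq_on (card (Field l)) =o l"
proof -
  let ?n = "card (Field l)"
  obtain h where h: "bij_betw h (Field l) {0..<?n}" using ex_bij_betw_finite_nat[OF fin] by blast
  have inj: "inj_on h (Field l)" using h by (simp add: bij_betw_def)
  have i1: "l =o dir_image l h" by (rule dir_image_ordIso[OF W inj])
  have Wd: "Well_order (dir_image l h)" by (rule Well_order_dir_image[OF W inj])
  have Fd: "Field (dir_image l h) = {x. x < ?n}"
    using h unfolding dir_image_Field bij_betw_def by auto
  have wd: "well_order_on {x. x < ?n} (dir_image l h)" using Wd Fd by simp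
  have "natLeq_on ?n =o dir_image l h"
    by (rule finite_well_order_on_ordIso[OF _ natLeq_on_well_order_on wd]) simp
  then show ?thesis using ordIso_symmetric[OF i1] ordIso_transitive by blast
qed

theorem mainTheorem11:
  fixes l0 l1 :: "(nat \<times> nat) set"
  assumes "add_indecomp l0" and "add_indecomp l1" and "(l1, l0) \<in> ordLess"
  shows "sH_le l0 (osum l0 l1) \<and> sH_le l1 (osum l0 l1)"
proof
  show "sH_le l0 (osum l0 l1)"
    unfolding sH_le_def
  proof (intro exI conjI allI impI)
    show "sigma11 p0" "pi11 q0" by (rule sig_pi)+
    fix S assume c: "copy_of S (osum l0 l1)"
    obtain A B where sp: "split S A B" and iA: "Restr S A =o l0" and iB: "Restr S B =o l1"
      using setup_split[OF c assms] by blast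
    interpret split S A B by (rule sp)
    have ex: "\<exists>X. VBs S X"
    proof -
      obtain Z where Z: "\<And>X. slc X 0 = A \<Longrightarrow> slc X 1 = Z \<Longrightarrow> VBs S X" using VBs_ex by blast
      obtain X where X: "slc X = (\<lambda>k. if k = 0 then A else Z)" using slc_surj by blast
      have "VBs S X" by (rule Z) (simp_all add: X)
      then show ?thesis by blast
    qed
    have eq: "\<And>X. VBs S X \<Longrightarrow> prod_encode ` R0s S X = prod_encode ` R0" using R0s_eq by simp
    have d1: "dset (diag S) p0 = prod_encode ` R0"
      unfolding dset_p0 SR_diag by (rule top_lemma(1)[OF ex eq])
    have d2: "dset (diag S) q0 = prod_encode ` R0"
      unfolding dset_q0 SR_diag by (rule top_lemma(2)[OF ex eq])
    show "dset (diag S) p0 = dset (diag S) q0" using d1 d2 by simp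
    have "copy_of R0 l0"
      unfolding copy_of_def Field_R0
      using c iso_rel_trans[OF iso_R0 iso_rel_ordIso[OF iA]] unfolding copy_of_def by blast
    then show "copy_of (prod_decode ` dset (diag S) p0) l0" unfolding d1 decode_encode .
  qed
next
  have W1: "Well_order l1" using assms(2) unfolding add_indecomp_def by blast
  show "sH_le l1 (osum l0 l1)"
  proof (cases "finite (Field l1)")
    case True
    let ?n = "card (Field l1)"
    show ?thesis
      unfolding sH_le_def
    proof (intro exI conjI allI impI)
      show "sigma11 (p2 ?n)" "pi11 (q2 ?n)" by (rule sig_pi)+
      fix S :: "(nat \<times> nat) set"
      show "dset (diag S) (p2 ?n) = dset (diag S) (q2 ?n)" unfolding dset_p2 dset_q2 ..
      have "copy_of (natLeq_on ?n) l1"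
        unfolding copy_of_def using iso_rel_ordIso[OF natLeq_iso[OF W1 True]]
        by (auto simp: Field_natLeq_on lessThan_def)
      then show "copy_of (prod_decode ` dset (diag S) (p2 ?n)) l1" unfolding dset_p2 decode_encode .
    qed
  next
    case False
    show ?thesis
      unfolding sH_le_def
    proof (intro exI conjI allI impI)
      show "sigma11 p1" "pi11 q1" by (rule sig_pi)+
      fix S assume c: "copy_of S (osum l0 l1)"
      obtain A B where sp: "split S A B" and iA: "Restr S A =o l0" and iB: "Restr S B =o l1"
        using setup_split[OF c assms] by blast
      interpret split S A B by (rule sp)
      have inf: "infinite B"
      proof
        assume fB: "finite B"
        obtain h where "iso (Restr S B) l1 h" using iB unfolding ordIso_def by blast
        then have "bij_betw h B (Field l1)" unfolding iso_iff2 FB by blast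
        then show False using fB False bij_betw_finite by blast
      qed
      have ex: "\<exists>X. VBs S X \<and> VEs S X" by (rule VE_ex[OF inf])
      have eq: "\<And>X. VBs S X \<and> VEs S X \<Longrightarrow> prod_encode ` R1s S X = prod_encode ` R1"
        using R1s_eq[OF inf] by simp
      have d1: "dset (diag S) p1 = prod_encode ` R1"
        unfolding dset_p1 SR_diag by (rule top_lemma(1)[OF ex eq])
      have d2: "dset (diag S) q1 = prod_encode ` R1"
        unfolding dset_q1 SR_diag by (rule top_lemma(2)[OF ex eq])
      show "dset (diag S) p1 = dset (diag S) q1" using d1 d2 by simp
      have "copy_of R1 l1"
        unfolding copy_of_def Field_R1[OF inf]
        using iso_rel_trans[OF iso_R1[OF inf] iso_rel_ordIso[OF iB]] by blast
      then show "copy_of (prod_decode ` dset (diag S) p1) l1" unfolding d1 decode_encode .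
    qed
  qed
qed



end
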